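(* Under assumptions (A1)–(A6), for (almost) every $x$ such that $P(Y(1)=1,M(1)=0\mid X=x)>0$, $$\zeta'(x)=1-\frac{\mu_{00}(x)}{\mu_{10}(x)},\qquad \delta'(x)=\zeta'(x),\qquad \psi'(x)=0.$$
   Context: Observed data $O=(X,A,M,Y)$ with covariates $X\in\mathbb{R}^d$, binary exposure $A$, binary mediator $M$, binary outcome $Y$. For $a,m\in\{0,1\}$, $Y(a,m)$ is the potential outcome under $A=a,M=m$, $M(a)$ the potential mediator, $Y(a):=Y(a,M(a))$, cross-world $Y(a,M(a'))$ by substitution, all on a common probability space with $O$. $\mu_{am}(x)=P(Y=1\mid A=a,M=m,X=x)$. Define $\delta'(x)=P(Y(0)=0\mid Y(1,M(1))=1,M(1)=0,X=x)$, $\psi'(x)=P(Y(1,M(0))=0,\,Y(0,M(0))=0\mid Y(1,M(1))=1,M(1)=0,X=x)$, $\zeta'(x)=P(Y(1,M(0))=1,\,Y(0,M(0))=0\mid Y(1,M(1))=1,M(1)=0,X=x)$. Assumptions: (A1) $A=a,M=m\Rightarrow Y=Y(a,m)$ and $A=a\Rightarrow M=M(a)$. (A2) $Y(1,1)\ge Y(1,0)\ge Y(0,0)$, $Y(1,1)\ge Y(0,1)$, $M(1)\ge M(0)$. (A3) $A\perp\{Y(1,1),Y(1,0),Y(0,1),Y(0,0),M(1),M(0)\}\mid X$. (A4) $\{Y(1,1),Y(1,0),Y(0,1),Y(0,0)\}\perp\{M(1),M(0)\}\mid X$. (A5) for some $\epsilon>0$, $P\{\min_{a,m}P(A=a,M=m\mid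 X)\ge\epsilon\}=1$. (A6) $P\{P(Y=1\mid A=1,M=1,X)\ge\epsilon\}=1$. *)

theory Defs
  imports "HOL-Probability.Probability"
begin

text \<open>Its value at w is P(E | X = X w).\<close>
definition cprob :: "'w measure \<Rightarrow> ('w \<Rightarrow> 'x::topological_space) \<Rightarrow> 'w set \<Rightarrow> 'w \<Rightarrow> real" where
  "cprob P X E = real_cond_exp P (vimage_algebra (space P) X borel) (indicator E)"

definition ccprob :: "'w measure \<Rightarrow> ('w \<Rightarrow> 'x::topological_space) \<Rightarrow> 'w set \<Rightarrow> 'w set \<Rightarrow> 'w \<Rightarrow> real" where
  "ccprob P X E F w = cprob P X (E \<inter> F) w / cprob P X F w"

definition cond_indep_disc :: "'w measure \<Rightarrow> ('w \<Rightarrow> 'x::topological_space) \<Rightarrow> ('w \<Rightarrow> 'u) \<Rightarrow> ('w \<Rightarrow> 'v) \<Rightarrow> bool" where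
  "cond_indep_disc P X U V \<longleftrightarrow>
     (\<forall>u v. AE w in P.
        cprob P X ({z\<in>space P. U z = u} \<inter> {z\<in>space P. V z = v}) w
          = cprob P X {z\<in>space P. U z = u} w * cprob P X {z\<in>space P. V z = v} w)"

end

theory Submission
  imports Defs
begin

lemma subalg_F:
  assumes "prob_space P" "X \<in> borel_measurable P"
  shows "sigma_finite_subalgebra P (vimage_algebra (space P) X borel)"
proof -
  interpret prob_space P by fact
  have "subalgebra P (vimage_algebra (space P) X borel)"
    unfolding subalgebra_def
  proof
    show "space (vimage_algebra (space P) X borel) = space P" by simp
    have "X \<in> space P \<rightarrow> space borel" by simp
    then show "sets (vimage_algebra (space P) X borel) \<subseteq> sets P"
      using assms(2) by (auto simp: sets_vimage_algebra2 measurable_sets)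
  qed
  then interpret finite_measure_subalgebra P "vimage_algebra (space P) X borel"
    by unfold_locales
  show ?thesis by (rule sigma_finite_subalgebra_axioms)
qed

lemma int_ind:
  assumes "prob_space P" "E \<in> sets P"
  shows "integrable P (indicator E :: _ \<Rightarrow> real)"
proof -
  interpret prob_space P by fact
  show ?thesis using assms(2) by (intro integrable_real_indicator) (auto simp: less_top[symmetric])
qed

lemma cprob_empty:
  assumes "prob_space P" "X \<in> borel_measurable P"
  shows "AE w in P. cprob P X {} w = 0"
proof -
  interpret sigma_finite_subalgebra P "vimage_algebra (space P) X borel"
    using subalg_F[OF assms] .
  have e: "indicator {} = (\<lambda>_. 0::real)" by (auto simp: fun_eq_iff)
  show ?thesis unfolding cprob_def e using real_cond_exp_F_meas[of "\<lambda>_. 0"] by simp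
qed

lemma cprob_sum:
  assumes "prob_space P" "X \<in> borel_measurable P" "finite I"
    "disjoint_family_on E I" "\<And>i. i \<in> I \<Longrightarrow> E i \<in> sets P"
  shows "AE w in P. cprob P X (\<Union>i\<in>I. E i) w = (\<Sum>i\<in>I. cprob P X (E i) w)"
proof -
  interpret sigma_finite_subalgebra P "vimage_algebra (space P) X borel"
    using subalg_F[OF assms(1,2)] .
  define f where "f i = (if i \<in> I then indicator (E i) else (\<lambda>_. 0::real))" for i
  have fi: "integrable P (f i)" for i
    using int_ind[OF assms(1)] assms(5) by (auto simp: f_def)
  have eq: "indicator (\<Union>i\<in>I. E i) = (\<lambda>x. \<Sum>i\<in>I. f i x)"
    using indicator_UN_disjoint[OF assms(3,4)] by (auto simp: f_def)
  have "AE x in P. real_cond_exp P (vimage_algebra (space P) X borel) (\<lambda>x. \<Sum>i\<in>I. f i x) x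
     = (\<Sum>i\<in>I. real_cond_exp P (vimage_algebra (space P) X borel) (f i) x)"
    by (rule real_cond_exp_sum[OF fi])
  then show ?thesis unfolding cprob_def eq
    by (auto simp: f_def)
qed

lemma cprob_union:
  assumes "prob_space P" "X \<in> borel_measurable P" "E \<in> sets P" "G \<in> sets P" "E \<inter> G = {}"
  shows "AE w in P. cprob P X (E \<union> G) w = cprob P X E w + cprob P X G w"
proof -
  interpret sigma_finite_subalgebra P "vimage_algebra (space P) X borel"
    using subalg_F[OF assms(1,2)] .
  have eq: "indicator (E \<union> G) = (\<lambda>x. indicator E x + indicator G x :: real)"
    using assms(5) by (auto simp: indicator_def fun_eq_iff)
  show ?thesis unfolding cprob_def eq
    by (rule real_cond_exp_add) (use int_ind[OF assms(1)] assms(3,4) in auto)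
qed

lemma indep_sets:
  fixes U :: "'w \<Rightarrow> 'u::finite" and V :: "'w \<Rightarrow> 'v::finite"
  assumes "prob_space P" "X \<in> borel_measurable P" "cond_indep_disc P X U V"
    "\<And>u. {z\<in>space P. U z = u} \<in> sets P" "\<And>v. {z\<in>space P. V z = v} \<in> sets P"
  shows "AE w in P. cprob P X ({z\<in>space P. U z \<in> S} \<inter> {z\<in>space P. V z \<in> T}) w
      = cprob P X {z\<in>space P. U z \<in> S} w * cprob P X {z\<in>space P. V z \<in> T} w"
proof -
  have ind: "AE w in P. \<forall>u v. cprob P X ({z\<in>space P. U z = u} \<inter> {z\<in>space P. V z = v}) w
          = cprob P X {z\<in>space P. U z = u} w * cprob P X {z\<in>space P. V z = v} w"
  proof -
    have "AE w in P. \<forall>u\<in>UNIV. \<forall>v\<in>UNIV. cprob P X ({z\<in>space P. U z = u} \<inter> {z\<in>space P. V z = v}) w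
          = cprob P X {z\<in>space P. U z = u} w * cprob P X {z\<in>space P. V z = v} w"
      using assms(3) unfolding cond_indep_disc_def
      by (intro AE_finite_allI) auto
    then show ?thesis by simp
  qed
  have e1: "{z\<in>space P. U z \<in> S} \<inter> {z\<in>space P. V z \<in> T} =
      (\<Union>uv\<in>S\<times>T. {z\<in>space P. U z = fst uv} \<inter> {z\<in>space P. V z = snd uv})" by auto
  have e2: "{z\<in>space P. U z \<in> S} = (\<Union>u\<in>S. {z\<in>space P. U z = u})" by auto
  have e3: "{z\<in>space P. V z \<in> T} = (\<Union>v\<in>T. {z\<in>space P. V z = v})" by auto
  have s1: "AE w in P. cprob P X ({z\<in>space P. U z \<in> S} \<inter> {z\<in>space P. V z \<in> T}) w =
     (\<Sum>uv\<in>S\<times>T. cprob P X ({z\<in>space P. U z = fst uv} \<inter> {z\<in>space P. V z = snd uv}) w)"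
    unfolding e1 by (rule cprob_sum[OF assms(1,2)])
      (auto simp: disjoint_family_on_def intro!: sets.Int assms(4,5) finite_subset[of _ UNIV])
  have s2: "AE w in P. cprob P X {z\<in>space P. U z \<in> S} w = (\<Sum>u\<in>S. cprob P X {z\<in>space P. U z = u} w)"
    unfolding e2 by (rule cprob_sum[OF assms(1,2)])
      (auto simp: disjoint_family_on_def intro!: assms(4) finite_subset[of _ UNIV])
  have s3: "AE w in P. cprob P X {z\<in>space P. V z \<in> T} w = (\<Sum>v\<in>T. cprob P X {z\<in>space P. V z = v} w)"
    unfolding e3 by (rule cprob_sum[OF assms(1,2)])
      (auto simp: disjoint_family_on_def intro!: assms(5) finite_subset[of _ UNIV])
  show ?thesis using ind s1 s2 s3
  proof eventually_elim
    case (elim w)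
    then show ?case
      by (simp add: sum_product sum.cartesian_product case_prod_beta)
  qed
qed

theorem proposition11:
  fixes P :: "'w measure"
    and X :: "'w \<Rightarrow> real ^ 'd"
    and A Mo Yo :: "'w \<Rightarrow> bool"
    and Ypo :: "bool \<Rightarrow> bool \<Rightarrow> 'w \<Rightarrow> bool"
    and Mpo :: "bool \<Rightarrow> 'w \<Rightarrow> bool"
    and \<epsilon> :: real
  assumes prob: "prob_space P"
    and X_meas: "X \<in> borel_measurable P"
    and A_meas: "A \<in> measurable P (count_space UNIV)"
    and Mo_meas: "Mo \<in> measurable P (count_space UNIV)"
    and Yo_meas: "Yo \<in> measurable P (count_space UNIV)"
    and Ypo_meas: "\<And>a m. Ypo a m \<in> measurable P (count_space UNIV)"
    and Mpo_meas: "\<And>a. Mpo a \<in> measurable P (count_space UNIV)"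
    \<comment> \<open>(A1) consistency\<close>
    and A1_Y: "\<And>w a m. w \<in> space P \<Longrightarrow> A w = a \<Longrightarrow> Mo w = m \<Longrightarrow> Yo w = Ypo a m w"
    and A1_M: "\<And>w a. w \<in> space P \<Longrightarrow> A w = a \<Longrightarrow> Mo w = Mpo a w"
    \<comment> \<open>(A2) monotonicity\<close>
    and A2: "\<And>w. w \<in> space P \<Longrightarrow>
               Ypo True False w \<le> Ypo True True w \<and> Ypo False False w \<le> Ypo True False w
             \<and> Ypo False True w \<le> Ypo True True w \<and> Mpo False w \<le> Mpo True w"
    \<comment> \<open>(A3) exposure ignorability\<close>
    and A3: "cond_indep_disc P X A
               (\<lambda>w. (Ypo True True w, Ypo True False w, Ypo False True w, Ypo False False w,
                     Mpo True w, Mpo False w))"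
    \<comment> \<open>(A4) cross-world independence of potential outcomes and potential mediators\<close>
    and A4: "cond_indep_disc P X
               (\<lambda>w. (Ypo True True w, Ypo True False w, Ypo False True w, Ypo False False w))
               (\<lambda>w. (Mpo True w, Mpo False w))"
    \<comment> \<open>(A5), (A6) positivity\<close>
    and eps_pos: "\<epsilon> > 0"
    and A5: "AE w in P. \<forall>a m. cprob P X {z\<in>space P. A z = a \<and> Mo z = m} w \<ge> \<epsilon>"
    and A6: "AE w in P. ccprob P X {z\<in>space P. Yo z} {z\<in>space P. A z = True \<and> Mo z = True} w \<ge> \<epsilon>"
  shows "AE w in P.
           cprob P X {z\<in>space P. Ypo True (Mpo True z) z \<and> \<not> Mpo True z} w > 0 \<longrightarrow>
           (let C = {z\<in>space P. Ypo True (Mpo True z) z \<and> \<not> Mpo True z};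
                mu00 = ccprob P X {z\<in>space P. Yo z} {z\<in>space P. A z = False \<and> Mo z = False} w;
                mu10 = ccprob P X {z\<in>space P. Yo z} {z\<in>space P. A z = True \<and> Mo z = False} w;
                \<delta>' = ccprob P X {z\<in>space P. \<not> Ypo False (Mpo False z) z} C w;
                \<psi>' = ccprob P X {z\<in>space P. \<not> Ypo True (Mpo False z) z \<and> \<not> Ypo False (Mpo False z) z} C w;
                \<zeta>' = ccprob P X {z\<in>space P. Ypo True (Mpo False z) z \<and> \<not> Ypo False (Mpo False z) z} C w
            in \<zeta>' = 1 - mu00 / mu10 \<and> \<delta>' = \<zeta>' \<and> \<psi>' = 0)"
proof -
  interpret prob_space P by (rule prob)
  note [measurable] = A_meas Mo_meas Yo_meas Ypo_meas Mpo_meas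
  define U4 where "U4 = (\<lambda>w. (Ypo True True w, Ypo True False w, Ypo False True w, Ypo False False w))"
  define V2 where "V2 = (\<lambda>w. (Mpo True w, Mpo False w))"
  define V6 where "V6 = (\<lambda>w. (Ypo True True w, Ypo True False w, Ypo False True w, Ypo False False w,
                     Mpo True w, Mpo False w))"
  have A3': "cond_indep_disc P X A V6" using A3 unfolding V6_def .
  have A4': "cond_indep_disc P X U4 V2" using A4 unfolding U4_def V2_def .
  have mU4: "\<And>u. {z\<in>space P. U4 z = u} \<in> sets P" unfolding U4_def by measurable
  have mV2: "\<And>u. {z\<in>space P. V2 z = u} \<in> sets P" unfolding V2_def by measurable
  have mV6: "\<And>u. {z\<in>space P. V6 z = u} \<in> sets P" unfolding V6_def by measurable
  have M01: "\<And>z. z \<in> space P \<Longrightarrow> \<not> Mpo True z \<Longrightarrow> Mpo False z = False"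
    using A2 by (auto simp: le_bool_def)
  have Y01: "\<And>z. z \<in> space P \<Longrightarrow> Ypo False False z \<Longrightarrow> Ypo True False z"
    using A2 by (auto simp: le_bool_def)
  have mA: "\<And>u. {z\<in>space P. A z = u} \<in> sets P" by measurable
  note ind3 = indep_sets[OF prob X_meas A3' mA mV6]
  note ind4 = indep_sets[OF prob X_meas A4' mU4 mV2]
  let ?c = "cprob P X"
  let ?C = "{z\<in>space P. Ypo True (Mpo True z) z \<and> \<not> Mpo True z}"
  let ?Y10 = "{z\<in>space P. Ypo True False z}"
  let ?Y00 = "{z\<in>space P. Ypo False False z}"
  let ?NM1 = "{z\<in>space P. \<not> Mpo True z}"
  let ?NM0 = "{z\<in>space P. \<not> Mpo False z}"
  let ?AT = "{z\<in>space P. A z}"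
  let ?AF = "{z\<in>space P. \<not> A z}"
  let ?Z = "{z\<in>space P. Ypo True False z \<and> \<not> Ypo False False z}"
  let ?Zl = "{z\<in>space P. Ypo True (Mpo False z) z \<and> \<not> Ypo False (Mpo False z) z}"
  let ?Dl = "{z\<in>space P. \<not> Ypo False (Mpo False z) z}"
  let ?Pl = "{z\<in>space P. \<not> Ypo True (Mpo False z) z \<and> \<not> Ypo False (Mpo False z) z}"
  let ?Yo = "{z\<in>space P. Yo z}"
  let ?B10 = "{z\<in>space P. A z = True \<and> Mo z = False}"
  let ?B00 = "{z\<in>space P. A z = False \<and> Mo z = False}"
  let ?Y00M0 = "{z\<in>space P. Ypo False False z \<and> \<not> Mpo False z}"

  have F1: "AE w in P. ?c ?C w = ?c ?Y10 w * ?c ?NM1 w"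
  proof -
    have e1: "{z\<in>space P. U4 z \<in> {u. fst (snd u)}} = ?Y10" by (auto simp: U4_def)
    have e2: "{z\<in>space P. V2 z \<in> {v. \<not> fst v}} = ?NM1" by (auto simp: V2_def)
    have e3: "?Y10 \<inter> ?NM1 = ?C" by auto
    show ?thesis using ind4[of "{u. fst (snd u)}" "{v. \<not> fst v}"] by (simp only: e1 e2 e3)
  qed
  have F2: "AE w in P. ?c (?Zl \<inter> ?C) w = ?c ?Z w * ?c ?NM1 w"
  proof -
    have e1: "{z\<in>space P. U4 z \<in> {u. fst (snd u) \<and> \<not> snd (snd (snd u))}} = ?Z" by (auto simp: U4_def)
    have e2: "{z\<in>space P. V2 z \<in> {v. \<not> fst v}} = ?NM1" by (auto simp: V2_def)
    have e3: "?Z \<inter> ?NM1 = ?Zl \<inter> ?C" using M01 Y01 by auto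
    show ?thesis using ind4[of "{u. fst (snd u) \<and> \<not> snd (snd (snd u))}" "{v. \<not> fst v}"]
      by (simp only: e1 e2 e3)
  qed
  have F3: "AE w in P. ?c ?Y10 w = ?c ?Z w + ?c ?Y00 w"
  proof -
    have e: "?Y10 = ?Z \<union> ?Y00" using M01 Y01 by auto
    show ?thesis unfolding e by (rule cprob_union[OF prob X_meas]) auto
  qed
  have E4: "?Dl \<inter> ?C = ?Zl \<inter> ?C" using M01 Y01 by auto
  have F5: "AE w in P. ?c (?Pl \<inter> ?C) w = 0"
  proof -
    have e: "?Pl \<inter> ?C = {}" using M01 Y01 by auto
    show ?thesis unfolding e by (rule cprob_empty[OF prob X_meas])
  qed
  have F6: "AE w in P. ?c (?Yo \<inter> ?B10) w = ?c ?AT w * ?c ?C w"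
  proof -
    let ?T = "{v. fst (snd v) \<and> \<not> fst (snd (snd (snd (snd v))))}"
    have e1: "{z\<in>space P. A z \<in> {True}} = ?AT" by auto
    have e2: "{z\<in>space P. V6 z \<in> ?T} = ?C" by (auto simp: V6_def)
    have e3: "?AT \<inter> ?C = ?Yo \<inter> ?B10" using A1_Y A1_M by fastforce
    show ?thesis using ind3[of "{True}" ?T] by (simp only: e1 e2 e3)
  qed
  have F7: "AE w in P. ?c ?B10 w = ?c ?AT w * ?c ?NM1 w"
  proof -
    let ?T = "{v. \<not> fst (snd (snd (snd (snd v))))}"
    have e1: "{z\<in>space P. A z \<in> {True}} = ?AT" by auto
    have e2: "{z\<in>space P. V6 z \<in> ?T} = ?NM1" by (auto simp: V6_def)
    have e3: "?AT \<inter> ?NM1 = ?B10" using A1_M by fastforce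
    show ?thesis using ind3[of "{True}" ?T] by (simp only: e1 e2 e3)
  qed
  have F8: "AE w in P. ?c (?Yo \<inter> ?B00) w = ?c ?AF w * ?c ?Y00M0 w"
  proof -
    let ?T = "{v. fst (snd (snd (snd v))) \<and> \<not> snd (snd (snd (snd (snd v))))}"
    have e1: "{z\<in>space P. A z \<in> {False}} = ?AF" by auto
    have e2: "{z\<in>space P. V6 z \<in> ?T} = ?Y00M0" by (auto simp: V6_def)
    have e3: "?AF \<inter> ?Y00M0 = ?Yo \<inter> ?B00" using A1_Y A1_M by fastforce
    show ?thesis using ind3[of "{False}" ?T] by (simp only: e1 e2 e3)
  qed
  have F9: "AE w in P. ?c ?Y00M0 w = ?c ?Y00 w * ?c ?NM0 w"
  proof -
    have e1: "{z\<in>space P. U4 z \<in> {u. snd (snd (snd u))}} = ?Y00" by (auto simp: U4_def)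
    have e2: "{z\<in>space P. V2 z \<in> {v. \<not> snd v}} = ?NM0" by (auto simp: V2_def)
    have e3: "?Y00 \<inter> ?NM0 = ?Y00M0" by auto
    show ?thesis using ind4[of "{u. snd (snd (snd u))}" "{v. \<not> snd v}"] by (simp only: e1 e2 e3)
  qed
  have F10: "AE w in P. ?c ?B00 w = ?c ?AF w * ?c ?NM0 w"
  proof -
    let ?T = "{v. \<not> snd (snd (snd (snd (snd v))))}"
    have e1: "{z\<in>space P. A z \<in> {False}} = ?AF" by auto
    have e2: "{z\<in>space P. V6 z \<in> ?T} = ?NM0" by (auto simp: V6_def)
    have e3: "?AF \<inter> ?NM0 = ?B00" using A1_M by fastforce
    show ?thesis using ind3[of "{False}" ?T] by (simp only: e1 e2 e3)
  qed
  have F11: "AE w in P. ?c ?B10 w \<ge> \<epsilon> \<and> ?c ?B00 w \<ge> \<epsilon>"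
    using A5
  proof eventually_elim
    case (elim w)
    show ?case using elim[rule_format, of True False] elim[rule_format, of False False] by simp
  qed

  show ?thesis using F1 F2 F3 F5 F6 F7 F8 F9 F10 F11
  proof eventually_elim
    case (elim w)
    show ?case
    proof
      assume pos: "?c ?C w > 0"
      have n1: "?c ?NM1 w \<noteq> 0" and c10: "?c ?Y10 w \<noteq> 0" using pos elim(1) by auto
      have a1: "?c ?AT w * ?c ?NM1 w > 0" using elim(6,10) eps_pos by linarith
      have b0: "?c ?AF w * ?c ?NM0 w > 0" using elim(9,10) eps_pos by linarith
      have mu10: "?c (?Yo \<inter> ?B10) w / ?c ?B10 w = ?c ?Y10 w"
      proof -
        have "?c ?AT w \<noteq> 0" "?c ?NM1 w \<noteq> 0" using a1 by auto
        then show ?thesis unfolding elim(5) elim(1) elim(6) by (simp add: field_simps)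
      qed
      have mu00: "?c (?Yo \<inter> ?B00) w / ?c ?B00 w = ?c ?Y00 w"
      proof -
        have "?c ?AF w \<noteq> 0" "?c ?NM0 w \<noteq> 0" using b0 by auto
        then show ?thesis unfolding elim(7) elim(8) elim(9) by (simp add: field_simps)
      qed
      have zeta: "?c (?Zl \<inter> ?C) w / ?c ?C w = 1 - ?c ?Y00 w / ?c ?Y10 w"
      proof -
        have "?c (?Zl \<inter> ?C) w / ?c ?C w = (?c ?Y10 w - ?c ?Y00 w) * ?c ?NM1 w / (?c ?Y10 w * ?c ?NM1 w)"
          unfolding elim(2) elim(1) using elim(3) by simp
        also have "\<dots> = 1 - ?c ?Y00 w / ?c ?Y10 w" using n1 c10 by (simp add: field_simps)
        finally show ?thesis .
      qed
      have psi: "?c (?Pl \<inter> ?C) w / ?c ?C w = 0" using elim(4) by simp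
      show "let C = ?C;
                mu00 = ccprob P X ?Yo ?B00 w;
                mu10 = ccprob P X ?Yo ?B10 w;
                \<delta>' = ccprob P X ?Dl C w;
                \<psi>' = ccprob P X ?Pl C w;
                \<zeta>' = ccprob P X ?Zl C w
            in \<zeta>' = 1 - mu00 / mu10 \<and> \<delta>' = \<zeta>' \<and> \<psi>' = 0"
        unfolding Let_def ccprob_def E4 mu10 mu00 zeta psi by simp
    qed
  qed
qed

end
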